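(* Let $\mu$ be a nonvanishing differentiable real function and $\omega^2$ a real function of $t$. The initial value problem for the variable parametric potential Burgers equation $$\frac{\partial\Upsilon}{\partial t}+\frac{\dot\mu(t)}{\mu(t)}\Upsilon+\frac12\Big(\frac{\partial\Upsilon}{\partial x}\Big)^2=\frac{1}{2\mu(t)}\frac{\partial^2\Upsilon}{\partial x^2}-\frac{\omega^2(t)}{2}x^2,\qquad \Upsilon(x,t)|_{t=t_0}=\Upsilon(x,t_0),$$ has the formal solution $\Upsilon(x,t)=-\frac{1}{\mu(t)}\ln\Phi(x,t)$, where $\Phi(x,t)$ satisfies the initial value problem for the variable parametric parabolic equation $$\frac{\partial\Phi}{\partial t}=\frac{1}{2\mu(t)}\frac{\partial^2\Phi}{\partial x^2}+\frac{\mu(t)\omega^2(t)}{2}x^2\Phi,\qquad \Phi(x,t_0)=\exp\big(-\mu(t_0)\Upsilon(x,t_0)\big).$$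
   Context: Dots denote $t$-derivatives. *)

theory Defs
  imports "HOL-Analysis.Analysis"
begin

end

theory Submission
  imports Defs
begin

theorem proposition4:
  fixes \<mu> \<mu>' w2 :: "real \<Rightarrow> real"
    and \<Phi> \<Phi>t \<Phi>x \<Phi>xx :: "real \<Rightarrow> real \<Rightarrow> real"
    and \<Upsilon>0 :: "real \<Rightarrow> real"
    and t0 :: real
  assumes mu_deriv: "\<And>t. (\<mu> has_real_derivative \<mu>' t) (at t)"
    and mu_nz: "\<And>t. \<mu> t \<noteq> 0"
    and Phi_pos: "\<And>x t. \<Phi> x t > 0"
    and Phi_t: "\<And>x t. ((\<lambda>s. \<Phi> x s) has_real_derivative \<Phi>t x t) (at t)"
    and Phi_x: "\<And>x t. ((\<lambda>y. \<Phi> y t) has_real_derivative \<Phi>x x t) (at x)"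
    and Phi_xx: "\<And>x t. ((\<lambda>y. \<Phi>x y t) has_real_derivative \<Phi>xx x t) (at x)"
    and Phi_pde: "\<And>x t. \<Phi>t x t = \<Phi>xx x t / (2 * \<mu> t) + \<mu> t * w2 t / 2 * x\<^sup>2 * \<Phi> x t"
    and Phi_init: "\<And>x. \<Phi> x t0 = exp (- \<mu> t0 * \<Upsilon>0 x)"
  shows "\<exists>Ut Ux Uxx :: real \<Rightarrow> real \<Rightarrow> real.
           (\<forall>x t. ((\<lambda>s. - ln (\<Phi> x s) / \<mu> s) has_real_derivative Ut x t) (at t)) \<and>
           (\<forall>x t. ((\<lambda>y. - ln (\<Phi> y t) / \<mu> t) has_real_derivative Ux x t) (at x)) \<and>
           (\<forall>x t. ((\<lambda>y. Ux y t) has_real_derivative Uxx x t) (at x)) \<and>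
           (\<forall>x t. Ut x t + \<mu>' t / \<mu> t * (- ln (\<Phi> x t) / \<mu> t) + (Ux x t)\<^sup>2 / 2
                   = Uxx x t / (2 * \<mu> t) - w2 t / 2 * x\<^sup>2) \<and>
           (\<forall>x. - ln (\<Phi> x t0) / \<mu> t0 = \<Upsilon>0 x)"
proof -
  define Ut where "Ut x t = ((- (\<Phi>t x t / \<Phi> x t)) * \<mu> t - (- ln (\<Phi> x t)) * \<mu>' t) / (\<mu> t * \<mu> t)" for x t
  define Ux where "Ux x t = - (\<Phi>x x t / \<Phi> x t) / \<mu> t" for x t
  define Uxx where "Uxx x t = - ((\<Phi>xx x t * \<Phi> x t - \<Phi>x x t * \<Phi>x x t) / (\<Phi> x t * \<Phi> x t)) / \<mu> t" for x t
  have A: "((\<lambda>s. - ln (\<Phi> x s) / \<mu> s) has_real_derivative Ut x t) (at t)" for x t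
    unfolding Ut_def
    using Phi_pos[of x t] mu_nz[of t]
    by (auto intro!: derivative_eq_intros Phi_t mu_deriv simp: field_simps power2_eq_square)
  have B: "((\<lambda>y. - ln (\<Phi> y t) / \<mu> t) has_real_derivative Ux x t) (at x)" for x t
    unfolding Ux_def
    using Phi_pos[of x t] mu_nz[of t]
    by (auto intro!: derivative_eq_intros Phi_x simp: field_simps)
  have C: "((\<lambda>y. Ux y t) has_real_derivative Uxx x t) (at x)" for x t
    unfolding Ux_def Uxx_def
    using Phi_pos[of x t] mu_nz[of t]
    by (auto intro!: derivative_eq_intros Phi_x Phi_xx simp: field_simps power2_eq_square)
  have D: "Ut x t + \<mu>' t / \<mu> t * (- ln (\<Phi> x t) / \<mu> t) + (Ux x t)\<^sup>2 / 2
                   = Uxx x t / (2 * \<mu> t) - w2 t / 2 * x\<^sup>2" for x t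
  proof -
    have p: "\<Phi> x t \<noteq> 0" using Phi_pos[of x t] by simp
    show ?thesis unfolding Ut_def Ux_def Uxx_def Phi_pde
      using p mu_nz[of t] by (simp add: field_simps power2_eq_square)
  qed
  have E: "- ln (\<Phi> x t0) / \<mu> t0 = \<Upsilon>0 x" for x
    using mu_nz[of t0] by (simp add: Phi_init)
  show ?thesis using A B C D E by blast
qed

end
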